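(* Let $p$ be a complex polynomial of degree at least two. Then every zero of $p'$ belongs to $H_p = \operatorname{conv} J_p$.
   Context: For a polynomial $p$ viewed as a holomorphic self-map of the Riemann sphere $\widehat{\mathbb{C}}$ (with $p(\infty)=\infty$), the Fatou set $F_p$ is the maximal open subset of $\widehat{\mathbb{C}}$ on which the iterates $\{p^{\circ n}\}_{n\in\mathbb{N}}$ form an equicontinuous family, and the Julia set $J_p$ is the complement $\widehat{\mathbb{C}}\setminus F_p$; for polynomials $J_p$ is a nonempty compact subset of $\mathbb{C}$. $\operatorname{conv} X$ denotes the convex hull of $X \subset \mathbb{C}\cong\mathbb{R}^2$. *)

theory Defs
  imports "HOL-Analysis.Analysis" "HOL-Computational_Algebra.Polynomial"
begin

text \<open>Chordal (spherical) metric on the Riemann sphere, restricted to finite points.\<close>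
definition chordal_dist :: "complex \<Rightarrow> complex \<Rightarrow> real" where
  "chordal_dist z w =
     2 * cmod (z - w) / (sqrt (1 + (cmod z)\<^sup>2) * sqrt (1 + (cmod w)\<^sup>2))"

definition iterates_equicontinuous_at :: "complex poly \<Rightarrow> complex \<Rightarrow> bool" where
  "iterates_equicontinuous_at p w \<longleftrightarrow>
     (\<forall>e>0. \<exists>d>0. \<forall>z. cmod (z - w) < d \<longrightarrow>
        (\<forall>n. chordal_dist ((poly p ^^ n) z) ((poly p ^^ n) w) < e))"

text \<open>Finite part of the Fatou set: points having an open neighbourhood on which
  the iterates are equicontinuous (the union of all such open sets is the maximal one).\<close>
definition fatou_set :: "complex poly \<Rightarrow> complex set" where
  "fatou_set p = {z. \<exists>U. open U \<and> z \<in> U \<and> (\<forall>w\<in>U. iterates_equicontinuous_at p w)}"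

text \<open>Julia set (for polynomials it lies in the finite plane).\<close>
definition julia_set :: "complex poly \<Rightarrow> complex set" where
  "julia_set p = UNIV - fatou_set p"

end

theory Submission
  imports Defs "HOL-Computational_Algebra.Fundamental_Theorem_Algebra"
begin


lemma pderiv_prod_roots:
  fixes root :: "nat \<Rightarrow> complex"
  assumes "\<And>i. i < n \<Longrightarrow> z \<noteq> root i"
  shows "poly (pderiv (\<Prod>i<n. [:-root i, 1:])) z =
         poly (\<Prod>i<n. [:-root i, 1:]) z * (\<Sum>i<n. 1 / (z - root i))"
  using assms
proof (induction n)
  case 0
  then show ?case by simp
next
  case (Suc n)
  have ih: "poly (pderiv (\<Prod>i<n. [:-root i, 1:])) z =
         poly (\<Prod>i<n. [:-root i, 1:]) z * (\<Sum>i<n. 1 / (z - root i))"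
    using Suc by auto
  have ne: "z - root n \<noteq> 0" using Suc.prems by auto
  have d: "pderiv ((\<Prod>i<n. [:-root i, 1:]) * [:-root n, 1:]) =
      (\<Prod>i<n. [:-root i, 1:]) + [:-root n, 1:] * pderiv (\<Prod>i<n. [:-root i, 1:])"
  proof -
    have "pderiv [:-root n, 1:] = 1" by (simp add: pderiv_pCons)
    then show ?thesis by (simp only: pderiv_mult mult_1_right)
  qed
  show ?case
    unfolding prod.lessThan_Suc d
    using ne by (simp add: ih sum.lessThan_Suc field_simps)
qed

lemma cnj_inv: "w \<noteq> 0 \<Longrightarrow> cnj (1 / w) = of_real (1 / (cmod w)^2) * w"
  by (subst complex_div_cnj) (simp add: field_simps)

lemma gauss_lucas:
  fixes q :: "complex poly"
  assumes "degree q \<ge> 1" "poly (pderiv q) z = 0"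
  shows "z \<in> convex hull {x. poly q x = 0}"
proof -
  obtain root where dec: "smult (lead_coeff q) (\<Prod>i<degree q. [:-root i, 1:]) = q"
    using complex_poly_decompose' by blast
  define n where "n = degree q"
  define P where "P = (\<Prod>i<n. [:-root i, 1:])"
  have qP: "q = smult (lead_coeff q) P" using dec by (simp add: P_def n_def)
  have lc: "lead_coeff q \<noteq> 0" using assms(1) by auto
  have roots: "poly q (root i) = 0" if "i < n" for i
  proof -
    have "poly P (root i) = 0" unfolding P_def poly_prod
      using that by (intro prod_zero) auto
    then show ?thesis by (subst qP) simp
  qed
  show ?thesis
  proof (cases "\<exists>i<n. z = root i")
    case True
    then show ?thesis using roots by (auto intro: hull_inc)
  next
    case False
    then have zr: "\<And>i. i < n \<Longrightarrow> z - root i \<noteq> 0" by auto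
    have Pz: "poly P z \<noteq> 0" unfolding P_def poly_prod using zr by (auto simp: prod_zero_iff)
    have "poly (pderiv q) z = lead_coeff q * poly (pderiv P) z"
      by (subst qP) (simp add: pderiv_smult)
    also have "\<dots> = lead_coeff q * poly P z * (\<Sum>i<n. 1 / (z - root i))"
      unfolding P_def using pderiv_prod_roots[of n z root] zr by simp
    finally have S0: "(\<Sum>i<n. 1 / (z - root i)) = 0" using assms(2) lc Pz by simp
    define w where "w i = 1 / (cmod (z - root i))^2" for i
    have wpos: "w i > 0" if "i < n" for i using zr[OF that] by (simp add: w_def)
    have "cnj (\<Sum>i<n. 1 / (z - root i)) = (\<Sum>i<n. of_real (w i) * (z - root i))"
      unfolding cnj_sum
    proof (rule sum.cong)
      fix i assume "i \<in> {..<n}"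
      then have "z - root i \<noteq> 0" using zr by auto
      then show "cnj (1 / (z - root i)) = of_real (w i) * (z - root i)"
        unfolding w_def by (rule cnj_inv)
    qed simp
    with S0 have S1: "(\<Sum>i<n. of_real (w i) * (z - root i)) = 0" by simp
    define W where "W = (\<Sum>i<n. w i)"
    have Wpos: "W > 0" unfolding W_def using wpos assms(1) n_def
    proof (intro sum_pos)
      have "0 \<in> {..<n}" using assms(1) n_def by simp
      then show "{..<n} \<noteq> {}" by blast
    qed auto
    have "(\<Sum>i<n. of_real (w i) * z) = (\<Sum>i<n. of_real (w i) * root i)"
      using S1 by (simp add: algebra_simps sum_subtractf)
    then have "of_real W * z = (\<Sum>i<n. of_real (w i) * root i)"
      by (simp add: W_def sum_distrib_right)
    then have zeq: "z = (\<Sum>i<n. (w i / W) *\<^sub>R root i)"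
      using Wpos by (simp add: scaleR_conv_of_real sum_divide_distrib[symmetric] field_simps sum_distrib_left)
    show ?thesis unfolding zeq
    proof (rule convex_sum)
      show "(\<Sum>i<n. w i / W) = 1" using Wpos by (simp add: W_def sum_divide_distrib[symmetric])
      show "\<And>i. i \<in> {..<n} \<Longrightarrow> 0 \<le> w i / W" using wpos Wpos by (auto intro: divide_nonneg_pos less_imp_le)
      show "\<And>i. i \<in> {..<n} \<Longrightarrow> root i \<in> convex hull {x. poly q x = 0}"
        using roots by (auto intro: hull_inc)
    qed auto
  qed
qed



lemma escape_radius:
  fixes p :: "complex poly"
  assumes "degree p \<ge> 2"
  shows "\<exists>R\<ge>1. \<forall>z. R \<le> cmod z \<longrightarrow> 2 * cmod z \<le> cmod (poly p z)"
proof -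
  obtain c q where p: "p = pCons c q" by (cases p)
  have q0: "q \<noteq> 0" using assms p by auto
  obtain c' q' where q: "q = pCons c' q'" by (cases q)
  have "degree q \<ge> 1" using assms p q0 by simp
  then have q'0: "q' \<noteq> 0" using q by auto
  obtain r where r: "\<forall>z. r \<le> cmod z \<longrightarrow> 2 + cmod c \<le> cmod (poly (pCons c' q') z)"
    using poly_infinity[OF q'0] by blast
  define R where "R = max r 1"
  have "2 * cmod z \<le> cmod (poly p z)" if "R \<le> cmod z" for z
  proof -
    have z1: "1 \<le> cmod z" "r \<le> cmod z" using that by (auto simp: R_def)
    have qz: "2 + cmod c \<le> cmod (poly q z)" using r z1 q by simp
    have "poly p z = c + z * poly q z" using p by simp
    then have "cmod (poly p z) \<ge> cmod (z * poly q z) - cmod c"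
      by (metis add.commute norm_diff_ineq add_diff_cancel_left' norm_triangle_ineq2 diff_add_cancel)
    moreover have "cmod (z * poly q z) \<ge> cmod z * (2 + cmod c)"
      using qz by (simp add: norm_mult mult_left_mono)
    moreover have "cmod z * cmod c \<ge> cmod c" using z1 by (simp add: mult_right_mono[of 1 "cmod z" "cmod c", simplified])
    ultimately show ?thesis by (simp add: algebra_simps)
  qed
  then show ?thesis by (intro exI[of _ R]) (auto simp: R_def)
qed

lemma chordal_lower:
  fixes Z W :: complex
  assumes "R \<ge> 1" "cmod W \<le> R" "2 * R \<le> cmod Z"
  shows "1 / (2 * sqrt (1 + R\<^sup>2)) \<le> chordal_dist Z W"
proof -
  define M where "M = cmod Z"
  have M1: "M \<ge> 1" "M > 0" using assms by (auto simp: M_def)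
  have d: "cmod (Z - W) \<ge> M / 2"
    using norm_triangle_ineq2[of Z W] assms by (simp add: M_def)
  have s1: "sqrt (1 + M\<^sup>2) \<le> 2 * M"
  proof -
    have "1 \<le> M\<^sup>2" using M1 by (simp add: one_le_power)
    then have "1 + M\<^sup>2 \<le> (2 * M)\<^sup>2" by (simp add: power_mult_distrib)
    then show ?thesis using M1 by (metis real_le_lsqrt less_imp_le mult_nonneg_nonneg zero_le_numeral) 
  qed
  have s2: "sqrt (1 + (cmod W)\<^sup>2) \<le> sqrt (1 + R\<^sup>2)"
    using assms by (simp add: power_mono)
  have p1: "sqrt (1 + M\<^sup>2) > 0" "sqrt (1 + (cmod W)\<^sup>2) > 0" "sqrt (1 + R\<^sup>2) > 0"
    by (auto intro: add_pos_nonneg)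
  define D where "D = sqrt (1 + M\<^sup>2) * sqrt (1 + (cmod W)\<^sup>2)"
  have D0: "D > 0" using p1 by (simp add: D_def)
  have DD: "D \<le> 2 * M * sqrt (1 + R\<^sup>2)"
    unfolding D_def using s1 s2 p1 M1 by (intro mult_mono) auto
  have "1 / (2 * sqrt (1 + R\<^sup>2)) = M / (2 * M * sqrt (1 + R\<^sup>2))" using M1 by simp
  also have "\<dots> \<le> M / D" using D0 DD M1 by (intro divide_left_mono) auto
  also have "\<dots> \<le> 2 * cmod (Z - W) / D" using d D0 by (intro divide_right_mono) auto
  also have "\<dots> = chordal_dist Z W" by (simp add: chordal_dist_def D_def M_def)
  finally show ?thesis .
qed

lemma julia_point:
  fixes p :: "complex poly"
  assumes R: "R \<ge> 1" "\<forall>z. R \<le> cmod z \<longrightarrow> 2 * cmod z \<le> cmod (poly p z)"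
    and bw: "\<forall>n. cmod ((poly p ^^ n) w) \<le> R"
    and near: "\<And>d. d > 0 \<Longrightarrow> \<exists>z n. cmod (z - w) < d \<and> cmod ((poly p ^^ n) z) > R"
  shows "w \<in> julia_set p"
  unfolding julia_set_def
proof
  show "w \<in> UNIV" by simp
  show "w \<notin> fatou_set p"
  proof
    assume "w \<in> fatou_set p"
    then have "iterates_equicontinuous_at p w" unfolding fatou_set_def by blast
    moreover have "1 / (2 * sqrt (1 + R\<^sup>2)) > 0" by (auto intro: add_pos_nonneg)
    ultimately obtain d where d: "d > 0" "\<forall>z. cmod (z - w) < d \<longrightarrow>
        (\<forall>n. chordal_dist ((poly p ^^ n) z) ((poly p ^^ n) w) < 1 / (2 * sqrt (1 + R\<^sup>2)))"
      unfolding iterates_equicontinuous_at_def by blast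
    obtain z n where zn: "cmod (z - w) < d" "cmod ((poly p ^^ n) z) > R" using near[OF d(1)] by blast
    have "2 * R \<le> cmod ((poly p ^^ Suc n) z)"
      using R zn(2) by (simp, smt (verit))
    then have "1 / (2 * sqrt (1 + R\<^sup>2)) \<le> chordal_dist ((poly p ^^ Suc n) z) ((poly p ^^ Suc n) w)"
      using chordal_lower[OF R(1) bw[rule_format, of "Suc n"]] by blast
    with d(2) zn(1) show False by (meson not_less)
  qed
qed

lemma cont_iter:
  fixes p :: "complex poly" and r a :: complex
  shows "continuous_on UNIV (\<lambda>t::real. (poly p ^^ n) (r - t *\<^sub>R a))"
proof (induction n)
  case 0
  have "continuous_on UNIV (\<lambda>t::real. r - t *\<^sub>R a)" by (intro continuous_intros)
  then show ?case by simp
next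
  case (Suc n)
  then show ?case using continuous_on_poly[OF Suc.IH, of p] by simp
qed



lemma bounded_orbit_in_hull:
  fixes p :: "complex poly"
  assumes R: "R \<ge> 1" "\<forall>z. R \<le> cmod z \<longrightarrow> 2 * cmod z \<le> cmod (poly p z)"
    and br: "\<forall>n. cmod ((poly p ^^ n) r) \<le> R"
  shows "r \<in> convex hull (julia_set p)"
proof (rule ccontr)
  define C where "C = convex hull (julia_set p)"
  assume "r \<notin> convex hull (julia_set p)"
  then have rC: "r \<notin> C" by (simp add: C_def)
  have "convex ((\<lambda>x. x - r) ` C)" by (simp add: C_def)
  moreover have "0 \<notin> (\<lambda>x. x - r) ` C" using rC by auto
  ultimately obtain a where a: "a \<noteq> 0" "\<forall>x\<in>(\<lambda>x. x - r) ` C. 0 \<le> inner a x"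
    using separating_hyperplane_set_0 by blast
  then have aC: "\<And>x. x \<in> C \<Longrightarrow> 0 \<le> inner a (x - r)" by auto
  define g where "g t = r - t *\<^sub>R a" for t :: real
  define B where "B = {t. 0 \<le> t \<and> (\<forall>n. cmod ((poly p ^^ n) (g t)) \<le> R)}"
  have B_eq: "B = {0..} \<inter> (\<Inter>n. (\<lambda>t. (poly p ^^ n) (g t)) -` cball 0 R)"
    unfolding B_def by (auto simp: dist_norm)
  have "closed B" unfolding B_eq g_def
    by (intro closed_Int closed_INT ballI closed_vimage closed_cball cont_iter closed_atLeast)
  moreover have "0 \<in> B" using br by (simp add: B_def g_def)
  moreover have "bdd_above B"
  proof
    fix t assume "t \<in> B"
    then have t0: "t \<ge> 0" and "cmod (g t) \<le> R" unfolding B_def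
      by (auto dest: spec[of _ 0])
    then have "cmod (t *\<^sub>R a) \<le> R + cmod r" unfolding g_def
      using norm_triangle_ineq2[of "t *\<^sub>R a" r] norm_minus_commute[of r "t *\<^sub>R a"] by (smt (verit))
    then have "t * cmod a \<le> R + cmod r" using t0 by simp
    then show "t \<le> (R + cmod r) / cmod a" using a(1) by (simp add: field_simps)
  qed
  ultimately have TB: "Sup B \<in> B" by (intro closed_contains_Sup) auto
  define T where "T = Sup B"
  have T0: "T \<ge> 0" and bT: "\<forall>n. cmod ((poly p ^^ n) (g T)) \<le> R" using TB by (auto simp: B_def T_def)
  have outside: "\<exists>n. cmod ((poly p ^^ n) (g t)) > R" if "t > T" for t
  proof -
    have "t \<notin> B" using that \<open>bdd_above B\<close> cSup_upper[of t B] by (auto simp: T_def)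
    then show ?thesis using that T0 by (auto simp: B_def not_le)
  qed
  have "g T \<in> julia_set p"
  proof (rule julia_point[OF R bT])
    fix d :: real assume d: "d > 0"
    define t where "t = T + d / (2 * cmod a)"
    have tT: "t > T" using d a(1) by (simp add: t_def)
    have "g t - g T = - ((d / (2 * cmod a)) *\<^sub>R a)" by (simp add: g_def t_def algebra_simps)
    then have "cmod (g t - g T) = d / 2" using a(1) d by simp
    then have "cmod (g t - g T) < d" using d by simp
    then show "\<exists>z n. cmod (z - g T) < d \<and> R < cmod ((poly p ^^ n) z)"
      using outside[OF tT] by blast
  qed
  then have "g T \<in> C" unfolding C_def by (rule hull_inc)
  then have "0 \<le> inner a (g T - r)" by (rule aC)
  then have "T * inner a a \<le> 0" by (simp add: g_def inner_diff_right)
  moreover have "inner a a > 0" using a(1) by simp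
  ultimately have "T = 0" using T0 by (smt (verit) mult_pos_pos)
  then have "g T = r" by (simp add: g_def)
  with \<open>g T \<in> C\<close> rC show False by simp
qed

lemma degree_diff_left:
  fixes p q :: "complex poly"
  assumes "degree q < degree p"
  shows "degree (p - q) = degree p"
  using degree_add_eq_left[of "- q" p] assms by simp

theorem mainTheorem3:
  fixes p :: "complex poly" and z :: complex
  assumes "degree p \<ge> 2"
    and "poly (pderiv p) z = 0"
  shows "z \<in> convex hull (julia_set p)"
proof -
  obtain R where R: "R \<ge> 1" "\<forall>z. R \<le> cmod z \<longrightarrow> 2 * cmod z \<le> cmod (poly p z)"
    using escape_radius[OF assms(1)] by blast
  have degX: "degree (p - [:0, 1:]) = degree p"
    using assms(1) by (simp add: degree_diff_left)
  then have "\<not> constant (poly (p - [:0, 1:]))" using assms(1) by (simp add: constant_degree)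
  then obtain x where "poly (p - [:0, 1:]) x = 0" using fundamental_theorem_of_algebra by blast
  then have fx: "poly p x = x" by simp
  have xR: "cmod x < R"
  proof (rule ccontr)
    assume "\<not> cmod x < R"
    then have "R \<le> cmod x" by simp
    then have "2 * cmod x \<le> cmod x" using R(2) fx by metis
    then show False using \<open>\<not> cmod x < R\<close> R(1) by simp
  qed
  define q where "q = p - [:x:]"
  have dq: "degree q = degree p" using assms(1) by (simp add: q_def degree_diff_left)
  have pq: "pderiv q = pderiv p" by (simp add: q_def pderiv_diff pderiv_pCons)
  have "z \<in> convex hull {y. poly q y = 0}"
    using gauss_lucas[of q z] dq pq assms by simp
  also have "\<dots> \<subseteq> convex hull (julia_set p)"
  proof (rule hull_minimal)
    show "convex (convex hull julia_set p)" by simp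
    show "{y. poly q y = 0} \<subseteq> convex hull julia_set p"
    proof
      fix y assume "y \<in> {y. poly q y = 0}"
      then have py: "poly p y = x" by (simp add: q_def)
      have iter: "(poly p ^^ Suc n) y = x" for n
        by (induction n) (simp_all add: py fx)
      have yR: "cmod y \<le> R"
      proof (rule ccontr)
        assume "\<not> cmod y \<le> R"
        then have "2 * cmod y \<le> cmod x" using R py by auto
        then show False using \<open>\<not> cmod y \<le> R\<close> xR R(1) by simp
      qed
      have "\<forall>n. cmod ((poly p ^^ n) y) \<le> R"
      proof
        fix n show "cmod ((poly p ^^ n) y) \<le> R"
          using yR xR iter by (cases n) auto
      qed
      then show "y \<in> convex hull julia_set p" by (rule bounded_orbit_in_hull[OF R])
    qed
  qed
  finally show ?thesis .
qed

end
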